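(* For every integer $m\ge 0$, there exist an NFA with $m+1$ states and a DFA with two states, both over an alphabet of cardinality $m+1$, such that there is a tower of height $2^{m+1}$ between their languages and there is no infinite tower between their languages.
   Context: For strings $v=a_1\cdots a_k$ and $w$, $v\preccurlyeq w$ if $w\in\Sigma^*a_1\Sigma^*a_2\Sigma^*\cdots\Sigma^*a_k\Sigma^*$. A sequence $(w_i)_{i=1}^r$ of strings is a tower between languages $K$ and $L$ if $w_1\in K\cup L$ and for all $i=1,\dots,r-1$: $w_i\preccurlyeq w_{i+1}$, $w_i\in K$ implies $w_{i+1}\in L$, and $w_i\in L$ implies $w_{i+1}\in K$; $r$ is its height. An infinite tower is an infinite sequence with the same properties. *)

theory Defs
  imports Main "HOL-Library.Sublist"
begin

definition is_nfa :: "'a set \<Rightarrow> 's set \<Rightarrow> 's set \<Rightarrow> 's set \<Rightarrow> ('s \<Rightarrow> 'a \<Rightarrow> 's set) \<Rightarrow> bool" where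
  "is_nfa Al Q I F delta \<longleftrightarrow> finite Al \<and> finite Q \<and> I \<subseteq> Q \<and> F \<subseteq> Q \<and>
     (\<forall>q\<in>Q. \<forall>a\<in>Al. delta q a \<subseteq> Q)"

definition is_dfa :: "'a set \<Rightarrow> 's set \<Rightarrow> 's set \<Rightarrow> 's set \<Rightarrow> ('s \<Rightarrow> 'a \<Rightarrow> 's set) \<Rightarrow> bool" where
  "is_dfa Al Q I F delta \<longleftrightarrow> is_nfa Al Q I F delta \<and> card I = 1 \<and>
     (\<forall>q\<in>Q. \<forall>a\<in>Al. card (delta q a) \<le> 1)"

fun steps :: "('s \<Rightarrow> 'a \<Rightarrow> 's set) \<Rightarrow> 's set \<Rightarrow> 'a list \<Rightarrow> 's set" where
  "steps delta S [] = S"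
| "steps delta S (a # w) = steps delta (\<Union>q\<in>S. delta q a) w"

definition lang :: "'a set \<Rightarrow> 's set \<Rightarrow> ('s \<Rightarrow> 'a \<Rightarrow> 's set) \<Rightarrow> 's set \<Rightarrow> 'a list set" where
  "lang Al I delta F = {w. set w \<subseteq> Al \<and> steps delta I w \<inter> F \<noteq> {}}"

definition is_tower :: "'a list set \<Rightarrow> 'a list set \<Rightarrow> 'a list list \<Rightarrow> bool" where
  "is_tower K L ws \<longleftrightarrow> ws \<noteq> [] \<and> hd ws \<in> K \<union> L \<and>
     (\<forall>i. Suc i < length ws \<longrightarrow>
        subseq (ws ! i) (ws ! Suc i) \<and>
        (ws ! i \<in> K \<longrightarrow> ws ! Suc i \<in> L) \<and>
        (ws ! i \<in> L \<longrightarrow> ws ! Suc i \<in> K))"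

definition is_infinite_tower :: "'a list set \<Rightarrow> 'a list set \<Rightarrow> (nat \<Rightarrow> 'a list) \<Rightarrow> bool" where
  "is_infinite_tower K L w \<longleftrightarrow> w 0 \<in> K \<union> L \<and>
     (\<forall>i. subseq (w i) (w (Suc i)) \<and>
        (w i \<in> K \<longrightarrow> w (Suc i) \<in> L) \<and>
        (w i \<in> L \<longrightarrow> w (Suc i) \<in> K))"

end

theory Submission
  imports Defs
begin

definition dN :: "nat \<Rightarrow> nat \<Rightarrow> nat set" where
  "dN q a = (if q = 0 then {} else if a < q then {q} else if a = q then {0..<q} else {})"

definition dD :: "nat \<Rightarrow> nat \<Rightarrow> nat set" where
  "dD q a = (if a = 0 then {1} else {0})"

lemma steps_union: "steps d S w = (\<Union>s\<in>S. steps d {s} w)"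
proof (induction w arbitrary: S)
  case Nil then show ?case by simp
next
  case (Cons a w)
  have "steps d S (a#w) = steps d (\<Union>q\<in>S. d q a) w" by simp
  also have "\<dots> = (\<Union>s\<in>(\<Union>q\<in>S. d q a). steps d {s} w)" by (rule Cons.IH)
  also have "\<dots> = (\<Union>q\<in>S. \<Union>s\<in>d q a. steps d {s} w)" by blast
  also have "\<dots> = (\<Union>q\<in>S. steps d {q} (a#w))"
  proof -
    have "steps d {q} (a#w) = (\<Union>s\<in>d q a. steps d {s} w)" for q
    proof -
      have "steps d {q} (a#w) = steps d (d q a) w" by simp
      also have "\<dots> = (\<Union>s\<in>d q a. steps d {s} w)" by (rule Cons.IH)
      finally show ?thesis .
    qed
    then show ?thesis by simp
  qed
  finally show ?case .
qed

definition acc :: "nat \<Rightarrow> nat list \<Rightarrow> bool" where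
  "acc j w \<longleftrightarrow> 0 \<in> steps dN {j} w"

lemma acc_Nil[simp]: "acc j [] \<longleftrightarrow> j = 0"
  by (auto simp: acc_def)

lemma acc_Cons: "acc j (a#w) \<longleftrightarrow> (\<exists>s\<in>dN j a. acc s w)"
proof -
  have "steps dN {j} (a#w) = steps dN (dN j a) w" by simp
  also have "\<dots> = (\<Union>s\<in>dN j a. steps dN {s} w)" by (rule steps_union)
  finally show ?thesis unfolding acc_def by blast
qed

lemma acc_0: "acc 0 w \<longleftrightarrow> w = []"
  by (cases w) (auto simp: acc_Cons dN_def)

lemma acc_set: "acc j w \<Longrightarrow> set w \<subseteq> {..j}"
proof (induction w arbitrary: j)
  case Nil then show ?case by simp
next
  case (Cons a w)
  then obtain s where s: "s \<in> dN j a" "acc s w" by (auto simp: acc_Cons)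
  then have "s \<le> j" "a \<le> j" by (auto simp: dN_def split: if_splits)
  with Cons.IH[OF s(2)] show ?case by auto
qed

lemma acc_last: "acc j w \<Longrightarrow> w = [] \<or> last w \<noteq> 0"
proof (induction w arbitrary: j)
  case Nil then show ?case by simp
next
  case (Cons a w)
  then obtain s where s: "s \<in> dN j a" "acc s w" by (auto simp: acc_Cons)
  show ?case
  proof (cases "w = []")
    case True
    with s have "s = 0" by simp
    with s(1) have "a = j" "j > 0" by (auto simp: dN_def split: if_splits)
    then show ?thesis using True by simp
  next
    case False
    with Cons.IH[OF s(2)] show ?thesis by simp
  qed
qed

lemma acc_mem: "acc j w \<Longrightarrow> j > 0 \<Longrightarrow> j \<in> set w"
proof (induction w arbitrary: j)
  case Nil then show ?case by simp
next
  case (Cons a w)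
  then obtain s where s: "s \<in> dN j a" "acc s w" by (auto simp: acc_Cons)
  show ?case
  proof (cases "a < j")
    case True
    with s have "s = j" by (auto simp: dN_def split: if_splits)
    with Cons.IH[of j] s Cons.prems show ?thesis by simp
  next
    case False
    with s have "a = j" by (auto simp: dN_def split: if_splits)
    then show ?thesis by simp
  qed
qed

lemma acc_split: "acc j w \<Longrightarrow> j > 0 \<Longrightarrow>
   \<exists>x y. w = x @ j # y \<and> set x \<subseteq> {..<j} \<and> (\<exists>k<j. acc k y)"
proof (induction w arbitrary: j)
  case Nil then show ?case by simp
next
  case (Cons a w)
  then obtain s where s: "s \<in> dN j a" "acc s w" by (auto simp: acc_Cons)
  show ?case
  proof (cases "a < j")
    case True
    with s have "s = j" by (auto simp: dN_def split: if_splits)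
    with Cons.IH[of j] s Cons.prems obtain x y where
      "w = x @ j # y" "set x \<subseteq> {..<j}" "\<exists>k<j. acc k y" by auto
    then show ?thesis using True by (intro exI[of _ "a#x"] exI[of _ y]) auto
  next
    case False
    with s Cons.prems have "a = j" "s < j" by (auto simp: dN_def split: if_splits)
    then show ?thesis using s by (intro exI[of _ "[]"] exI[of _ w]) auto
  qed
qed

lemma acc_join: "set x \<subseteq> {..<j} \<Longrightarrow> k < j \<Longrightarrow> acc k y \<Longrightarrow> acc j (x @ j # y)"
proof (induction x)
  case Nil then show ?case by (auto simp: acc_Cons dN_def)
next
  case (Cons a x)
  then show ?case by (auto simp: acc_Cons dN_def)
qed

definition AA :: "nat \<Rightarrow> nat list set" where
  "AA i = {w. \<exists>j\<le>i. acc j w}"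

lemma subseq_cut:
  assumes "c \<notin> set x'" "subseq (x @ c # y) (x' @ c # y')"
  shows "subseq y y'"
proof -
  have "subseq (c # y) (x' @ c # y')"
    using subseq_order.order_trans[OF subseq_drop_many[OF subseq_order.order_refl] assms(2)] .
  then have "subseq (c # y) (c # y')" using assms(1)
  proof (induction x')
    case Nil then show ?case by simp
  next
    case (Cons a x')
    then have "c \<noteq> a" by simp
    then have "subseq (c # y) (x' @ c # y')"
      using subseq_Cons2_neq[of c y a "x' @ c # y'"] Cons.prems(1) by simp
    then show ?case using Cons.IH Cons.prems(2) by simp
  qed
  then show ?thesis by (simp add: subseq_Cons2')
qed

lemma no_chain: "\<not> (\<exists>f. \<forall>n. f n \<in> AA i \<and> subseq (f n @ [0]) (f (Suc n)))"
proof (induction i)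
  case 0
  show ?case
  proof
    assume "\<exists>f. \<forall>n. f n \<in> AA 0 \<and> subseq (f n @ [0]) (f (Suc n))"
    then obtain f where f: "\<forall>n. f n \<in> AA 0 \<and> subseq (f n @ [0]) (f (Suc n))" by blast
    have A0: "AA 0 = {[]}" by (auto simp: AA_def acc_0)
    have "f (Suc 0) \<in> AA 0" using f by blast
    then have "f (Suc 0) = []" using A0 by blast
    moreover have "subseq (f 0 @ [0]) (f (Suc 0))" using f by blast
    ultimately show False by simp
  qed
next
  case (Suc i)
  show ?case
  proof
    assume "\<exists>f. \<forall>n. f n \<in> AA (Suc i) \<and> subseq (f n @ [0]) (f (Suc n))"
    then obtain f where f: "\<And>n. f n \<in> AA (Suc i)" "\<And>n. subseq (f n @ [0]) (f (Suc n))" by blast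
    have sub: "subseq (f n) (f (Suc n))" for n
      using subseq_order.order_trans[OF subseq_rev_drop_many[OF subseq_order.order_refl] f(2)[of n]] .
    show False
    proof (cases "\<exists>N. Suc i \<in> set (f N)")
      case False
      have "f n \<in> AA i" for n
      proof -
        obtain j where j: "j \<le> Suc i" "acc j (f n)" using f(1)[of n] by (auto simp: AA_def)
        have "j \<noteq> Suc i" using acc_mem[OF j(2)] False by auto
        with j have "j \<le> i" by simp
        with j show ?thesis unfolding AA_def by blast
      qed
      then show False using Suc.IH f(2) by blast
    next
      case True
      then obtain N where N: "Suc i \<in> set (f N)" by blast
      have mem: "Suc i \<in> set (f (N + n))" for n
      proof (induction n)
        case 0 then show ?case using N by simp
      next
        case (Suc n)
        from list_emb_set[OF sub[of "N+n"] Suc] obtain y where "y \<in> set (f (Suc (N+n)))" "Suc i = y" .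
        then show ?case by simp
      qed
      have ex: "\<exists>p. f (N+n) = fst p @ Suc i # snd p \<and> set (fst p) \<subseteq> {..<Suc i} \<and> snd p \<in> AA i" for n
      proof -
        obtain j where j: "j \<le> Suc i" "acc j (f (N+n))" using f(1)[of "N+n"] by (auto simp: AA_def)
        have "j = Suc i"
        proof (rule ccontr)
          assume "j \<noteq> Suc i"
          then have "j \<le> i" using j by simp
          then show False using acc_set[OF j(2)] mem[of n] by auto
        qed
        then obtain x y k where "f (N+n) = x @ Suc i # y" "set x \<subseteq> {..<Suc i}" "k < Suc i" "acc k y"
          using acc_split[of "Suc i" "f (N+n)"] j by blast
        moreover have "y \<in> AA i" unfolding AA_def using calculation(3,4) less_Suc_eq_le by blast
        ultimately show ?thesis by (intro exI[of _ "(x,y)"]) simp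
      qed
      obtain P where P: "\<And>n. f (N+n) = fst (P n) @ Suc i # snd (P n) \<and> set (fst (P n)) \<subseteq> {..<Suc i} \<and> snd (P n) \<in> AA i"
      proof -
        have "\<forall>n. \<exists>p. f (N+n) = fst p @ Suc i # snd p \<and> set (fst p) \<subseteq> {..<Suc i} \<and> snd p \<in> AA i"
          using ex by (rule allI)
        from choice[OF this] obtain P where
          "\<forall>n. f (N+n) = fst (P n) @ Suc i # snd (P n) \<and> set (fst (P n)) \<subseteq> {..<Suc i} \<and> snd (P n) \<in> AA i" ..
        then show ?thesis using that by blast
      qed
      define X where "X n = fst (P n)" for n
      define Y where "Y n = snd (P n)" for n
      have XY: "\<And>n. f (N+n) = X n @ Suc i # Y n \<and> set (X n) \<subseteq> {..<Suc i} \<and> Y n \<in> AA i"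
        using P unfolding X_def Y_def by blast
      have "subseq (Y n @ [0]) (Y (Suc n))" for n
      proof -
        have "subseq (X n @ Suc i # (Y n @ [0])) (X (Suc n) @ Suc i # Y (Suc n))"
          using f(2)[of "N+n"] XY[of n] XY[of "Suc n"] by simp
        moreover have "Suc i \<notin> set (X (Suc n))" using XY[of "Suc n"] by auto
        ultimately show ?thesis using subseq_cut by metis
      qed
      then show False using Suc.IH XY by blast
    qed
  qed
qed

lemma stepsD: "steps dD {q} w = {if w = [] then q else if last w = 0 then 1 else 0}"
  by (induction w arbitrary: q) (auto simp: dD_def)

fun T :: "nat \<Rightarrow> nat list list" where
  "T 0 = [[], [0]]"
| "T (Suc m) = T m @ map (\<lambda>t. last (T m) @ Suc m # t) (T m)"

declare T.simps(2)[simp del]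

definition LL :: "nat \<Rightarrow> nat list set" where
  "LL m = {w. set w \<subseteq> {0..m} \<and> w \<noteq> [] \<and> last w = 0}"

lemma T_props:
  "length (T m) = 2 ^ Suc m \<and> hd (T m) = [] \<and>
   (\<forall>i < length (T m). (even i \<longrightarrow> T m ! i \<in> AA m) \<and> (odd i \<longrightarrow> T m ! i \<in> LL m)) \<and>
   (\<forall>i. Suc i < length (T m) \<longrightarrow> subseq (T m ! i) (T m ! Suc i))"
proof (induction m)
  case 0
  have "[] \<in> AA 0" by (auto simp: AA_def)
  moreover have "[0] \<in> LL 0" by (auto simp: LL_def)
  ultimately have a: "T 0 ! 0 \<in> AA 0" "T 0 ! 1 \<in> LL 0" by simp_all
  have b: "subseq (T 0 ! 0) (T 0 ! 1)" by simp
  have l: "length (T 0) = 2" by simp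
  have c: "\<forall>i < length (T 0). (even i \<longrightarrow> T 0 ! i \<in> AA 0) \<and> (odd i \<longrightarrow> T 0 ! i \<in> LL 0)"
  proof (intro allI impI)
    fix i assume "i < length (T 0)"
    then have "i = 0 \<or> i = 1" using l by linarith
    then show "(even i \<longrightarrow> T 0 ! i \<in> AA 0) \<and> (odd i \<longrightarrow> T 0 ! i \<in> LL 0)" using a by auto
  qed
  have d: "\<forall>i. Suc i < length (T 0) \<longrightarrow> subseq (T 0 ! i) (T 0 ! Suc i)"
  proof (intro allI impI)
    fix i assume "Suc i < length (T 0)"
    then have "i = 0" using l by linarith
    then show "subseq (T 0 ! i) (T 0 ! Suc i)" using b by simp
  qed
  show ?case using l c d by simp
next
  case (Suc m)
  define n where "n = (2::nat) ^ Suc m"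
  define z where "z = last (T m)"
  have len: "length (T m) = n" and hd0: "hd (T m) = []"
    and memb: "\<And>i. i < n \<Longrightarrow> (even i \<longrightarrow> T m ! i \<in> AA m) \<and> (odd i \<longrightarrow> T m ! i \<in> LL m)"
    and ch: "\<And>i. Suc i < n \<Longrightarrow> subseq (T m ! i) (T m ! Suc i)"
    using Suc unfolding n_def by auto
  have evn: "even n" unfolding n_def by simp
  have npos: "n > 0" unfolding n_def by simp
  have ne: "T m \<noteq> []" using len npos by auto
  have zlast: "z = T m ! (n - 1)" using len ne unfolding z_def by (simp add: last_conv_nth)
  have oddn1: "odd (n - 1)" using evn npos by simp
  have zL: "z \<in> LL m" using memb[of "n - 1"] zlast oddn1 npos by simp
  have t0: "T m ! 0 = []" using hd0 ne by (simp add: hd_conv_nth)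
  have AAmono: "AA m \<subseteq> AA (Suc m)" unfolding AA_def using le_SucI by blast
  have LLmono: "LL m \<subseteq> LL (Suc m)" unfolding LL_def by auto
  have TS: "T (Suc m) = T m @ map (\<lambda>t. z @ Suc m # t) (T m)" unfolding z_def by (rule T.simps(2))
  have p1': "length (T (Suc m)) = 2 * n" using len unfolding TS by simp
  have nthA: "T (Suc m) ! i = T m ! i" if "i < n" for i
    using that len unfolding TS by (simp add: nth_append)
  have nthB: "T (Suc m) ! (n + k) = z @ Suc m # T m ! k" if "k < n" for k
    using that len unfolding TS by (simp add: nth_append)
  have p1: "length (T (Suc m)) = 2 ^ Suc (Suc m)" using p1' unfolding n_def by simp
  have p2: "hd (T (Suc m)) = []" using hd0 ne unfolding TS by simp
  have zset: "set z \<subseteq> {..<Suc m}" using zL unfolding LL_def by auto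
  have p3: "(even i \<longrightarrow> T (Suc m) ! i \<in> AA (Suc m)) \<and> (odd i \<longrightarrow> T (Suc m) ! i \<in> LL (Suc m))"
    if i: "i < length (T (Suc m))" for i
  proof (cases "i < n")
    case True
    have "(even i \<longrightarrow> T m ! i \<in> AA m) \<and> (odd i \<longrightarrow> T m ! i \<in> LL m)" using memb True .
    then show ?thesis unfolding nthA[OF True] using AAmono LLmono by blast
  next
    case False
    define k where "k = i - n"
    have ik: "i = n + k" using False unfolding k_def by simp
    have k: "k < n" using i p1' ik by simp
    have par: "even i \<longleftrightarrow> even k" using evn ik by simp
    have eq: "T (Suc m) ! i = z @ Suc m # T m ! k" using nthB[OF k] ik by simp
    have mk: "(even k \<longrightarrow> T m ! k \<in> AA m) \<and> (odd k \<longrightarrow> T m ! k \<in> LL m)" using memb k .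
    show ?thesis
    proof (intro conjI impI)
      assume "even i"
      then have "T m ! k \<in> AA m" using mk par by blast
      then obtain j where j: "j \<le> m" "acc j (T m ! k)" unfolding AA_def by blast
      have "acc (Suc m) (z @ Suc m # T m ! k)" using acc_join[OF zset _ j(2)] j(1) by simp
      then show "T (Suc m) ! i \<in> AA (Suc m)" unfolding eq AA_def by blast
    next
      assume "odd i"
      then have "T m ! k \<in> LL m" using mk par by blast
      then show "T (Suc m) ! i \<in> LL (Suc m)" unfolding eq using zL unfolding LL_def by auto
    qed
  qed
  have p4: "subseq (T (Suc m) ! i) (T (Suc m) ! Suc i)" if i: "Suc i < length (T (Suc m))" for i
  proof -
    consider "Suc i < n" | "Suc i = n" | "Suc i > n" by linarith
    then show ?thesis
    proof cases
      case 1
      then have "T (Suc m) ! i = T m ! i" "T (Suc m) ! Suc i = T m ! Suc i" using nthA by simp_all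
      then show ?thesis using ch[OF 1] by simp
    next
      case 2
      have "i = n - 1" using 2 by simp
      then have a: "T (Suc m) ! i = z" using nthA[of i] 2 zlast by simp
      have "T (Suc m) ! (n + 0) = z @ Suc m # T m ! 0" using nthB[of 0] npos by blast
      then have b: "T (Suc m) ! Suc i = z @ [Suc m]" using 2 t0 by simp
      show ?thesis unfolding a b by (rule subseq_rev_drop_many[OF subseq_order.order_refl])
    next
      case 3
      define k where "k = i - n"
      have ik: "i = n + k" using 3 unfolding k_def by simp
      have k: "Suc k < n" using i p1' ik by simp
      have e1: "T (Suc m) ! i = z @ Suc m # T m ! k" using nthB[of k] k ik by simp
      have e2: "T (Suc m) ! Suc i = z @ Suc m # T m ! Suc k" using nthB[of "Suc k"] k ik by simp
      have "subseq (T m ! k) (T m ! Suc k)" using ch[OF k] .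
      then show ?thesis unfolding e1 e2 by (simp add: subseq_append')
    qed
  qed
  show ?case using p1 p2 p3 p4 by blast
qed

theorem theorem9:
  fixes m :: nat
  shows "\<exists>(Al :: nat set) (Q1 :: nat set) I1 F1 d1 (Q2 :: nat set) I2 F2 d2.
     card Al = m + 1 \<and>
     is_nfa Al Q1 I1 F1 d1 \<and> card Q1 = m + 1 \<and>
     is_dfa Al Q2 I2 F2 d2 \<and> card Q2 = 2 \<and>
     (\<exists>ws. is_tower (lang Al I1 d1 F1) (lang Al I2 d2 F2) ws \<and> length ws = 2 ^ (m + 1)) \<and>
     \<not> (\<exists>w. is_infinite_tower (lang Al I1 d1 F1) (lang Al I2 d2 F2) w)"
proof -
  let ?Al = "{0..m}"
  let ?K = "lang ?Al {0..m} dN {0}"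
  let ?L = "lang ?Al {0} dD {1::nat}"
  have K: "?K = AA m"
  proof -
    have "w \<in> ?K \<longleftrightarrow> w \<in> AA m" for w
    proof
      assume "w \<in> ?K"
      then show "w \<in> AA m" unfolding lang_def AA_def acc_def
        by (subst (asm) steps_union) auto
    next
      assume "w \<in> AA m"
      then obtain j where j: "j \<le> m" "acc j w" by (auto simp: AA_def)
      then have "set w \<subseteq> ?Al" using acc_set by fastforce
      then show "w \<in> ?K" using j unfolding lang_def acc_def
        by (subst steps_union) auto
    qed
    then show ?thesis by blast
  qed
  have L: "?L = LL m" unfolding lang_def LL_def stepsD by auto
  have disj: "AA m \<inter> LL m = {}"
  proof -
    have "w \<notin> LL m" if "w \<in> AA m" for w
    proof -
      from that obtain j where "acc j w" unfolding AA_def by blast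
      then have "w = [] \<or> last w \<noteq> 0" by (rule acc_last)
      then show ?thesis unfolding LL_def by blast
    qed
    then show ?thesis by blast
  qed
  have nfa: "is_nfa ?Al {0..m} {0..m} {0} dN" by (auto simp: is_nfa_def dN_def)
  have dfa: "is_dfa ?Al {0,1} {0} {1} dD" by (auto simp: is_dfa_def is_nfa_def dD_def)
  have tower: "is_tower ?K ?L (T m)"
  proof -
    have P: "length (T m) = 2 ^ Suc m" "hd (T m) = []"
      "\<And>i. i < length (T m) \<Longrightarrow> (even i \<longrightarrow> T m ! i \<in> AA m) \<and> (odd i \<longrightarrow> T m ! i \<in> LL m)"
      "\<And>i. Suc i < length (T m) \<Longrightarrow> subseq (T m ! i) (T m ! Suc i)"
      using T_props[of m] by auto
    have h: "[] \<in> AA m" by (auto simp: AA_def)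
    show ?thesis unfolding is_tower_def K L
    proof (intro conjI allI impI)
      show "T m \<noteq> []" using P(1) by auto
      show "hd (T m) \<in> AA m \<union> LL m" using P(2) h by simp
    next
      fix i assume i: "Suc i < length (T m)"
      show "subseq (T m ! i) (T m ! Suc i)" using P(4) i .
      have a: "(even i \<longrightarrow> T m ! i \<in> AA m) \<and> (odd i \<longrightarrow> T m ! i \<in> LL m)" using P(3) i by simp
      have b: "(even (Suc i) \<longrightarrow> T m ! Suc i \<in> AA m) \<and> (odd (Suc i) \<longrightarrow> T m ! Suc i \<in> LL m)"
        using P(3) i by simp
      show "T m ! i \<in> AA m \<Longrightarrow> T m ! Suc i \<in> LL m" using a b disj by (cases "even i") auto
      show "T m ! i \<in> LL m \<Longrightarrow> T m ! Suc i \<in> AA m" using a b disj by (cases "even i") auto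
    qed
  qed
  have noinf: "\<not> (\<exists>w. is_infinite_tower ?K ?L w)"
  proof
    assume "\<exists>w. is_infinite_tower ?K ?L w"
    then obtain f where f0: "f 0 \<in> AA m \<union> LL m"
      and fs: "\<And>i. subseq (f i) (f (Suc i))"
      and fK: "\<And>i. f i \<in> AA m \<Longrightarrow> f (Suc i) \<in> LL m"
      and fL: "\<And>i. f i \<in> LL m \<Longrightarrow> f (Suc i) \<in> AA m"
      unfolding is_infinite_tower_def K L by blast
    have step: "f (Suc (Suc i)) \<in> AA m \<and> subseq (f i @ [0]) (f (Suc (Suc i)))"
      if "f i \<in> AA m" for i
    proof -
      have l: "f (Suc i) \<in> LL m" using fK that .
      have l2: "f (Suc i) \<noteq> []" "last (f (Suc i)) = 0" using l unfolding LL_def by auto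
      define u where "u = butlast (f (Suc i))"
      have u: "f (Suc i) = u @ [0]" using l2 unfolding u_def by (metis append_butlast_last_id)
      have "subseq (f i @ [0]) (f (Suc i))"
      proof (cases "f i = []")
        case True then show ?thesis unfolding u using subseq_drop_many[of "[0]" "[0]" u] by simp
      next
        case False
        from that obtain j where "acc j (f i)" unfolding AA_def by blast
        then have "last (f i) \<noteq> 0" using False acc_last by blast
        define v where "v = butlast (f i)"
        define b where "b = last (f i)"
        have v: "f i = v @ [b]" "b \<noteq> 0" using False \<open>last (f i) \<noteq> 0\<close>
          unfolding v_def b_def by simp_all
        have "subseq (v @ [b]) (u @ [0])" using fs[of i] u v by simp
        then obtain x1 x2 where x: "v @ [b] = x1 @ x2" "subseq x1 u" "subseq x2 [0]"
          by (rule subseq_appendE)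
        have "x2 = []"
        proof (cases x2)
          case Nil then show ?thesis .
        next
          case (Cons c r)
          have "c = 0 \<and> r = []"
          proof (cases "c = 0")
            case True then show ?thesis using x(3) Cons by simp
          next
            case False then show ?thesis using x(3) Cons by simp
          qed
          then have "v @ [b] = x1 @ [0]" using x(1) Cons by simp
          then show ?thesis using v(2) by simp
        qed
        then have "subseq (v @ [b]) u" using x by simp
        then have "subseq ((v @ [b]) @ [0]) (u @ [0])" by (rule list_emb_append_mono) simp
        then show ?thesis using u v by simp
      qed
      then show ?thesis using fL[OF l] fs[of "Suc i"] by (meson subseq_order.order_trans)
    qed
    obtain n0 where n0: "f n0 \<in> AA m" using f0 fL by blast
    define g where "g k = f (n0 + 2 * k)" for k
    have gA: "g k \<in> AA m" for k
      by (induction k) (auto simp: g_def n0 step)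
    have "subseq (g k @ [0]) (g (Suc k))" for k
      using step[OF gA[of k, unfolded g_def]] by (simp add: g_def)
    then show False using no_chain[of m] gA by blast
  qed
  show ?thesis
    apply (rule exI[of _ ?Al], rule exI[of _ "{0..m}"], rule exI[of _ "{0..m}"], rule exI[of _ "{0}"],
           rule exI[of _ dN], rule exI[of _ "{0,1}"], rule exI[of _ "{0}"], rule exI[of _ "{1}"],
           rule exI[of _ dD])
  proof (intro conjI)
    show "card ?Al = m + 1" by simp
    show "is_nfa ?Al {0..m} {0..m} {0} dN" by (rule nfa)
    show "card {0..m} = m + 1" by simp
    show "is_dfa ?Al {0,1} {0} {1} dD" by (rule dfa)
    show "card {0::nat,1} = 2" by simp
    have "length (T m) = 2 ^ (m + 1)" using T_props[of m] by simp
    then show "\<exists>ws. is_tower ?K ?L ws \<and> length ws = 2 ^ (m + 1)" using tower by blast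
    show "\<not> (\<exists>w. is_infinite_tower ?K ?L w)" by (rule noinf)
  qed
qed

end
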